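(* Let $n\ge3$ and $2\le m\le n-1$. Then $$\mathcal{H}^{[n]}_{K;m}(t)=\sum_{k\ge1}c^{[n]}_{k;m}t^k=\frac{t^{m-1}\mathcal{A}_{m-2}(1/t)}{t^n\mathcal{K}_n(1/t)}.$$
   Context: $K^{\infty}_n=\langle y_1,\dots,y_n\mid y_iy_j=y_jy_i\ (j+2\le i\le n-1),\ y_ny_k=y_ky_n\ (1\le k\le n-3)\rangle$. $c^{[n]}_{k;m}$ is the number of elements of $K^\infty_n$ of length $k$ whose smallest representative word in length-lexicographic order ($y_1<\cdots<y_n$) begins with $y_m$. $\mathcal{K}_n(\lambda)=\det(\lambda I_n-M_n)$ where $(M_n)_{j,i}=1$ if $i\ge j-1$ or $(j,i)=(n,n-2)$, $0$ otherwise. $\mathcal{A}_r(\lambda)=\det(\lambda I_r-N_r)$ for $r\ge1$ with $(N_r)_{j,i}=1$ if $i\ge j-1$, $0$ otherwise, and $\mathcal{A}_0=1$. *)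

theory Defs
  imports Complex_Main "Jordan_Normal_Form.Char_Poly"
begin

(* Generators y_1..y_n are encoded as the natural numbers 1..n; words are lists. *)

definition Kcomm0 :: "nat \<Rightarrow> nat \<Rightarrow> nat \<Rightarrow> bool" where
  "Kcomm0 n i j \<longleftrightarrow> (1 \<le> j \<and> j + 2 \<le> i \<and> i \<le> n - 1) \<or> (i = n \<and> 1 \<le> j \<and> j \<le> n - 3)"

definition Kcomm :: "nat \<Rightarrow> nat \<Rightarrow> nat \<Rightarrow> bool" where
  "Kcomm n a b \<longleftrightarrow> Kcomm0 n a b \<or> Kcomm0 n b a"

definition Kstep :: "nat \<Rightarrow> nat list \<Rightarrow> nat list \<Rightarrow> bool" where
  "Kstep n w w' \<longleftrightarrow> (\<exists>u v a b. Kcomm n a b \<and> w = u @ [a, b] @ v \<and> w' = u @ [b, a] @ v)"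

definition Keq :: "nat \<Rightarrow> nat list \<Rightarrow> nat list \<Rightarrow> bool" where
  "Keq n = (Kstep n)\<^sup>*\<^sup>*"

definition Kwords :: "nat \<Rightarrow> nat list set" where
  "Kwords n = {w. set w \<subseteq> {1..n}}"

(* the element of K^infty_n represented by a word, as its set of representative words *)
definition Kclass :: "nat \<Rightarrow> nat list \<Rightarrow> nat list set" where
  "Kclass n w = {w' \<in> Kwords n. Keq n w w'}"

definition Kelems :: "nat \<Rightarrow> nat \<Rightarrow> nat list set set" where
  "Kelems n k = {Kclass n w | w. w \<in> Kwords n \<and> length w = k}"

definition is_llex_min :: "nat list \<Rightarrow> nat list set \<Rightarrow> bool" where
  "is_llex_min w X \<longleftrightarrow> w \<in> X \<and> (\<forall>w'\<in>X. w' \<noteq> w \<longrightarrow> (w, w') \<in> lenlex {(a, b). a < b})"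

definition c_coef :: "nat \<Rightarrow> nat \<Rightarrow> nat \<Rightarrow> nat" where
  "c_coef n k m = card {X \<in> Kelems n k. \<exists>w. is_llex_min w X \<and> w \<noteq> [] \<and> hd w = m}"

(* M_n, with 0-based indices: entry (j,i) (row j, column i) *)
definition M_mat :: "nat \<Rightarrow> real mat" where
  "M_mat n = mat n n (\<lambda>(j, i). if i + 1 \<ge> j \<or> (j = n - 1 \<and> i = n - 3) then 1 else 0)"

definition N_mat :: "nat \<Rightarrow> real mat" where
  "N_mat r = mat r r (\<lambda>(j, i). if i + 1 \<ge> j then 1 else 0)"

definition K_poly :: "nat \<Rightarrow> real poly" where
  "K_poly n = char_poly (M_mat n)"

definition A_poly :: "nat \<Rightarrow> real poly" where
  "A_poly r = (if r = 0 then 1 else char_poly (N_mat r))"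

end

theory Submission
  imports Defs
begin


definition okn :: "nat \<Rightarrow> nat \<Rightarrow> nat \<Rightarrow> bool" where
  "okn n x y \<longleftrightarrow> x \<le> y + 1 \<or> (x = n \<and> n \<le> y + 2)"

fun nfc :: "nat \<Rightarrow> nat list \<Rightarrow> bool" where
  "nfc n [] = True"
| "nfc n [x] = True"
| "nfc n (x # y # w) = (okn n x y \<and> nfc n (y # w))"

lemma nfc_tl: "nfc n (x # w) \<Longrightarrow> nfc n w"
  by (cases w) auto

lemma nfc_prefix: "nfc n (xs @ ys) \<Longrightarrow> nfc n xs"
proof (induction xs rule: nfc.induct)
  case (3 n x y w) then show ?case by auto
qed (auto)

lemma Kcomm_sym: "Kcomm n a b = Kcomm n b a"
  unfolding Kcomm_def by auto

lemma Kcomm_irrefl: "\<not> Kcomm n a a"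
  unfolding Kcomm_def Kcomm0_def by auto

lemma Kstep_sym: "Kstep n w w' \<Longrightarrow> Kstep n w' w"
  unfolding Kstep_def using Kcomm_sym by blast

lemma Keq_refl: "Keq n w w" unfolding Keq_def by simp

lemma Keq_trans: "Keq n u v \<Longrightarrow> Keq n v w \<Longrightarrow> Keq n u w"
  unfolding Keq_def by simp

lemma Keq_sym: "Keq n u v \<Longrightarrow> Keq n v u"
  unfolding Keq_def
proof (induction rule: rtranclp_induct)
  case base then show ?case by simp
next
  case (step y z) then show ?case
    by (meson Kstep_sym converse_rtranclp_into_rtranclp)
qed

lemma Kstep_length: "Kstep n w w' \<Longrightarrow> length w' = length w"
  unfolding Kstep_def by auto

lemma Kstep_set: "Kstep n w w' \<Longrightarrow> set w' = set w"
  unfolding Kstep_def by auto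

lemma Keq_length: "Keq n w w' \<Longrightarrow> length w' = length w"
  unfolding Keq_def by (induction rule: rtranclp_induct) (auto dest: Kstep_length)

lemma Keq_set: "Keq n w w' \<Longrightarrow> set w' = set w"
  unfolding Keq_def by (induction rule: rtranclp_induct) (auto dest: Kstep_set)

lemma Kstep_filter:
  assumes "\<not> Kcomm n c d" "Kstep n w w'"
  shows "filter (\<lambda>x. x = c \<or> x = d) w = filter (\<lambda>x. x = c \<or> x = d) w'"
proof -
  obtain u v a b where ab: "Kcomm n a b" "w = u @ [a, b] @ v" "w' = u @ [b, a] @ v"
    using assms(2) unfolding Kstep_def by blast
  have "\<not> ((a = c \<or> a = d) \<and> (b = c \<or> b = d))"
    using ab(1) assms(1) Kcomm_irrefl Kcomm_sym by metis
  then show ?thesis using ab by auto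
qed

lemma Keq_filter:
  assumes "\<not> Kcomm n c d" "Keq n w w'"
  shows "filter (\<lambda>x. x = c \<or> x = d) w = filter (\<lambda>x. x = c \<or> x = d) w'"
  using assms(2) unfolding Keq_def
  by (induction rule: rtranclp_induct) (auto dest: Kstep_filter[OF assms(1)])

lemma cross:
  "nfc n (x # p @ [a]) \<Longrightarrow> a < x \<Longrightarrow> Kcomm n a x \<Longrightarrow> \<forall>z\<in>set p. Kcomm n a z \<Longrightarrow> False"
proof (induction p arbitrary: x)
  case Nil
  then have "okn n x a" by simp
  then show ?case using Nil(2,3) unfolding okn_def Kcomm_def Kcomm0_def by linarith
next
  case (Cons z p)
  have ok: "okn n x z" and nf: "nfc n (z # p @ [a])" using Cons.prems(1) by auto
  have kz: "Kcomm n a z" using Cons.prems(4) by auto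
  have "a < z" using ok kz Cons.prems(2,3) unfolding okn_def Kcomm_def Kcomm0_def by auto
  then show ?case using Cons.IH[OF nf _ kz] Cons.prems(4) by auto
qed

lemma first_lemma:
  assumes nf: "nfc n (b # u)" and ab: "a < b" and au: "a \<in> set u"
    and hd: "\<forall>c. \<not> Kcomm n a c \<longrightarrow> hd (filter (\<lambda>x. x = a \<or> x = c) (b # u)) = a"
  shows False
proof -
  obtain p s where u: "u = p @ a # s" and ap: "a \<notin> set p"
    using split_list_first[OF au] by blast
  have comm: "Kcomm n a z" if z: "z \<in> set (b # p)" for z
  proof (rule ccontr)
    assume nc: "\<not> Kcomm n a z"
    have za: "z \<noteq> a" using z ap ab by auto
    let ?P = "\<lambda>x. x = a \<or> x = z"
    have ne: "filter ?P (b # p) \<noteq> []" using z by (auto simp: filter_empty_conv)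
    have sub: "set (filter ?P (b # p)) \<subseteq> {z}" using ap ab by auto
    have "hd (filter ?P (b # p)) = z"
      using hd_in_set[OF ne] sub by auto
    moreover have "filter ?P (b # u) = filter ?P (b # p) @ filter ?P (a # s)" using u by simp
    ultimately have "hd (filter ?P (b # u)) = z" using ne by simp
    then show False using hd nc za by auto
  qed
  have "nfc n (b # p @ [a])" using nf u nfc_prefix[of n "b # p @ [a]" s] by simp
  then show False using cross[of n b p a] ab comm by auto
qed

lemma nf_unique:
  "nfc n w \<Longrightarrow> nfc n w' \<Longrightarrow>
   (\<forall>c d. \<not> Kcomm n c d \<longrightarrow> filter (\<lambda>x. x = c \<or> x = d) w = filter (\<lambda>x. x = c \<or> x = d) w')
   \<Longrightarrow> w = w'"
proof (induction w arbitrary: w')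
  case Nil
  show ?case
  proof (cases w')
    case (Cons b w1)
    have "filter (\<lambda>x. x = b \<or> x = b) ([]::nat list) = filter (\<lambda>x. x = b \<or> x = b) w'"
      using Nil.prems(3) Kcomm_irrefl by blast
    then show ?thesis using Cons by simp
  qed simp
next
  case (Cons a w1)
  note pr = Cons.prems(3)
  have "filter (\<lambda>x. x = a \<or> x = a) (a # w1) = filter (\<lambda>x. x = a \<or> x = a) w'"
    using pr Kcomm_irrefl by blast
  then obtain b w1' where w': "w' = b # w1'"
    by (cases w') auto
  show ?case
  proof (cases "a = b")
    case True
    have "\<forall>c d. \<not> Kcomm n c d \<longrightarrow> filter (\<lambda>x. x = c \<or> x = d) w1 = filter (\<lambda>x. x = c \<or> x = d) w1'"
    proof (intro allI impI)
      fix c d assume "\<not> Kcomm n c d"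
      then have "filter (\<lambda>x. x = c \<or> x = d) (a # w1) = filter (\<lambda>x. x = c \<or> x = d) (b # w1')"
        using pr w' by blast
      then show "filter (\<lambda>x. x = c \<or> x = d) w1 = filter (\<lambda>x. x = c \<or> x = d) w1'"
        using True by (auto split: if_splits)
    qed
    then have "w1 = w1'" using Cons.IH nfc_tl Cons.prems(1,2) w' by blast
    then show ?thesis using True w' by simp
  next
    case False
    have hdw: "hd (filter (\<lambda>x. x = a \<or> x = c) w') = a" if "\<not> Kcomm n a c" for c
      using pr that by (metis (mono_tags, lifting) filter.simps(2) list.sel(1))
    have hdw2: "hd (filter (\<lambda>x. x = b \<or> x = c) (a # w1)) = b" if "\<not> Kcomm n b c" for c
      using pr that w' by (metis (mono_tags, lifting) filter.simps(2) list.sel(1))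
    have aw: "a \<in> set w1'"
    proof -
      have "filter (\<lambda>x. x = a \<or> x = a) (a # w1) = filter (\<lambda>x. x = a \<or> x = a) w'"
        using pr Kcomm_irrefl by blast
      then have "filter (\<lambda>x. x = a \<or> x = a) w' = a # filter (\<lambda>x. x = a \<or> x = a) w1" by simp
      then have "a \<in> set (filter (\<lambda>x. x = a \<or> x = a) w')" by simp
      then have "a \<in> set w'" by simp
      then show ?thesis using w' False by auto
    qed
    have bw: "b \<in> set w1"
    proof -
      have "filter (\<lambda>x. x = b \<or> x = b) (a # w1) = filter (\<lambda>x. x = b \<or> x = b) w'"
        using pr Kcomm_irrefl by blast
      then have "filter (\<lambda>x. x = b \<or> x = b) (a # w1) = b # filter (\<lambda>x. x = b \<or> x = b) w1'" using w' by simp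
      then have "b \<in> set (filter (\<lambda>x. x = b \<or> x = b) (a # w1))" by simp
      then have "b \<in> set (a # w1)" by (auto split: if_splits)
      then show ?thesis using False by auto
    qed
    show ?thesis
    proof (cases "a < b")
      case True
      then show ?thesis using first_lemma[of n b w1' a] Cons.prems(2) w' aw hdw by auto
    next
      case F: False
      then have "b < a" using False by simp
      then show ?thesis using first_lemma[of n a w1 b] Cons.prems(1) bw hdw2 by auto
    qed
  qed
qed


abbreviation Rl :: "(nat \<times> nat) set" where "Rl \<equiv> {(a, b). a < b}"

lemma Rl_irrefl: "irrefl Rl" by (auto simp: irrefl_def)
lemma Rl_asym: "asym Rl" by (auto intro: asymI)
lemma Rl_total: "total Rl" by (auto simp: total_on_def)
lemma Rl_wf: "wf Rl" using wf_less by simp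

lemma swap_smaller: "y < x \<Longrightarrow> (u @ [y, x] @ v, u @ [x, y] @ v) \<in> lenlex Rl"
  using lenlex_append2[OF Rl_irrefl] by (simp add: Cons_lenlex_iff)

lemma not_nfc_swap:
  "\<not> nfc n w \<Longrightarrow> set w \<subseteq> {1..n} \<Longrightarrow> \<exists>u v x y. w = u @ [x, y] @ v \<and> y < x \<and> Kcomm n x y"
proof (induction w rule: nfc.induct)
  case (3 n x y w)
  show ?case
  proof (cases "okn n x y")
    case True
    then have "\<not> nfc n (y # w)" using 3 by simp
    then obtain u v a b where "y # w = u @ [a, b] @ v" "b < a" "Kcomm n a b"
      using 3 by auto
    then show ?thesis by (metis append_Cons)
  next
    case False
    have "Kcomm n x y" using False "3.prems"(2) unfolding okn_def Kcomm_def Kcomm0_def by auto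
    moreover have "y < x" using False unfolding okn_def by auto
    ultimately show ?thesis by (intro exI[of _ "[]"] exI[of _ w] exI[of _ x] exI[of _ y]) simp
  qed
qed auto

lemma Kclass_mem_words: "w \<in> Kclass n w0 \<Longrightarrow> set w \<subseteq> {1..n}"
  unfolding Kclass_def Kwords_def by auto

lemma llexmin_nfc:
  assumes "is_llex_min w (Kclass n w0)"
  shows "nfc n w"
proof (rule ccontr)
  assume nn: "\<not> nfc n w"
  have wX: "w \<in> Kclass n w0" using assms unfolding is_llex_min_def by auto
  obtain u v x y where w: "w = u @ [x, y] @ v" and yx: "y < x" and c: "Kcomm n x y"
    using not_nfc_swap[OF nn Kclass_mem_words[OF wX]] by blast
  define w' where "w' = u @ [y, x] @ v"
  have st: "Kstep n w w'" unfolding Kstep_def w w'_def using c by blast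
  have "Keq n w0 w'" using wX st unfolding Kclass_def Keq_def by auto
  moreover have "w' \<in> Kwords n" using wX Kstep_set[OF st] unfolding Kclass_def Kwords_def by auto
  ultimately have w'X: "w' \<in> Kclass n w0" unfolding Kclass_def by auto
  have ne: "w' \<noteq> w" using yx unfolding w w'_def by auto
  have "(w, w') \<in> lenlex Rl" using assms w'X ne unfolding is_llex_min_def by auto
  moreover have "(w', w) \<in> lenlex Rl" unfolding w w'_def using swap_smaller[OF yx] by simp
  ultimately show False using asym_lenlex[OF Rl_asym] by (meson asymD)
qed

lemma llexmin_exists:
  assumes "w0 \<in> Kwords n"
  shows "\<exists>w. is_llex_min w (Kclass n w0)"
proof -
  have w0X: "w0 \<in> Kclass n w0" using assms Keq_refl unfolding Kclass_def by auto
  obtain z where zX: "z \<in> Kclass n w0" and zmin: "\<And>y. (y, z) \<in> lenlex Rl \<Longrightarrow> y \<notin> Kclass n w0"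
    using wf_eq_minimal[THEN iffD1, OF wf_lenlex[OF Rl_wf], rule_format, OF w0X] by blast
  have "(z, w') \<in> lenlex Rl" if "w' \<in> Kclass n w0" "w' \<noteq> z" for w'
    using total_lenlex[OF Rl_total] that zmin unfolding total_on_def by blast
  then show ?thesis using zX unfolding is_llex_min_def by blast
qed

lemma Kclass_same: "w \<in> Kclass n w0 \<Longrightarrow> Kclass n w = Kclass n w0"
  unfolding Kclass_def using Keq_sym Keq_trans by blast

lemma nfc_unique_class:
  assumes "w \<in> Kclass n w0" "w' \<in> Kclass n w0" "nfc n w" "nfc n w'"
  shows "w = w'"
proof -
  have "Keq n w w'" using assms(1,2) Keq_sym Keq_trans unfolding Kclass_def by blast
  then show ?thesis using nf_unique[OF assms(3,4)] Keq_filter by blast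
qed

definition Sset :: "nat \<Rightarrow> nat \<Rightarrow> nat \<Rightarrow> nat list set" where
  "Sset n k m = {w \<in> Kwords n. length w = k \<and> nfc n w \<and> w \<noteq> [] \<and> hd w = m}"

lemma c_coef_Sset: "c_coef n k m = card (Sset n k m)"
proof -
  have eq: "{X \<in> Kelems n k. \<exists>w. is_llex_min w X \<and> w \<noteq> [] \<and> hd w = m} = Kclass n ` Sset n k m"
  proof (intro equalityI subsetI)
    fix X assume "X \<in> {X \<in> Kelems n k. \<exists>w. is_llex_min w X \<and> w \<noteq> [] \<and> hd w = m}"
    then obtain w0 w where X: "X = Kclass n w0" and w0: "w0 \<in> Kwords n" "length w0 = k"
      and mw: "is_llex_min w X" "w \<noteq> []" "hd w = m"
      unfolding Kelems_def by blast
    have wX: "w \<in> X" using mw unfolding is_llex_min_def by auto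
    have "nfc n w" using llexmin_nfc mw X by blast
    moreover have "w \<in> Kwords n" "length w = k" using wX X w0 Keq_length unfolding Kclass_def by auto
    ultimately have "w \<in> Sset n k m" using mw unfolding Sset_def by auto
    moreover have "X = Kclass n w" using Kclass_same wX X by auto
    ultimately show "X \<in> Kclass n ` Sset n k m" by blast
  next
    fix X assume "X \<in> Kclass n ` Sset n k m"
    then obtain w where X: "X = Kclass n w" and w: "w \<in> Sset n k m" by blast
    have wk: "w \<in> Kwords n" using w unfolding Sset_def by auto
    obtain z where z: "is_llex_min z X" using llexmin_exists[OF wk] X by blast
    have "nfc n z" using llexmin_nfc z X by blast
    moreover have "z \<in> X" using z unfolding is_llex_min_def by auto
    moreover have "w \<in> X" using X wk Keq_refl unfolding Kclass_def by auto
    ultimately have "z = w" using nfc_unique_class X w unfolding Sset_def by blast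
    then have "\<exists>w. is_llex_min w X \<and> w \<noteq> [] \<and> hd w = m" using z w unfolding Sset_def by auto
    moreover have "X \<in> Kelems n k" using X w unfolding Kelems_def Sset_def by auto
    ultimately show "X \<in> {X \<in> Kelems n k. \<exists>w. is_llex_min w X \<and> w \<noteq> [] \<and> hd w = m}" by blast
  qed
  have inj: "inj_on (Kclass n) (Sset n k m)"
  proof (rule inj_onI)
    fix w w' assume w: "w \<in> Sset n k m" and w': "w' \<in> Sset n k m" and eq: "Kclass n w = Kclass n w'"
    have "w \<in> Kclass n w" "w' \<in> Kclass n w" using w w' eq Keq_refl unfolding Kclass_def Sset_def by auto
    then show "w = w'" using nfc_unique_class w w' unfolding Sset_def by blast
  qed
  show ?thesis unfolding c_coef_def eq using card_image[OF inj] by simp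
qed

fun acnt :: "nat \<Rightarrow> nat \<Rightarrow> nat \<Rightarrow> nat" where
  "acnt n 0 x = 1"
| "acnt n (Suc k) x = (\<Sum>y\<in>{y\<in>{1..n}. okn n x y}. acnt n k y)"

lemma Sset_Suc0: "x \<in> {1..n} \<Longrightarrow> Sset n (Suc 0) x = {[x]}"
  unfolding Sset_def Kwords_def by (auto simp: length_Suc_conv)

lemma Sset_SucSuc:
  "Sset n (Suc (Suc k)) x = (\<Union>y\<in>{y\<in>{1..n}. okn n x y}. (Cons x) ` Sset n (Suc k) y) \<inter> {w. x \<in> {1..n}}"
proof (intro equalityI subsetI)
  fix w assume w: "w \<in> Sset n (Suc (Suc k)) x"
  then obtain y w' where ww: "w = x # y # w'" and l: "length w' = k"
    unfolding Sset_def by (auto simp: length_Suc_conv)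
  have "y # w' \<in> Sset n (Suc k) y" "okn n x y" "y \<in> {1..n}" "x \<in> {1..n}"
    using w ww l unfolding Sset_def Kwords_def by auto
  then show "w \<in> (\<Union>y\<in>{y\<in>{1..n}. okn n x y}. (Cons x) ` Sset n (Suc k) y) \<inter> {w. x \<in> {1..n}}"
    using ww by blast
next
  fix w assume "w \<in> (\<Union>y\<in>{y\<in>{1..n}. okn n x y}. (Cons x) ` Sset n (Suc k) y) \<inter> {w. x \<in> {1..n}}"
  then obtain y w' where "y \<in> {1..n}" "okn n x y" "w' \<in> Sset n (Suc k) y" "w = x # w'" "x \<in> {1..n}"
    by blast
  then show "w \<in> Sset n (Suc (Suc k)) x" unfolding Sset_def Kwords_def
    by (cases w') auto
qed

lemma Sset_finite: "finite (Sset n k x)"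
proof -
  have "Sset n k x \<subseteq> {w. set w \<subseteq> {1..n} \<and> length w = k}" unfolding Sset_def Kwords_def by auto
  then show ?thesis using finite_lists_length_eq[of "{1..n}" k] finite_subset by auto
qed

lemma card_Sset: "x \<in> {1..n} \<Longrightarrow> card (Sset n (Suc k) x) = acnt n k x"
proof (induction k arbitrary: x)
  case 0
  then show ?case using Sset_Suc0 by simp
next
  case (Suc k)
  have "card (Sset n (Suc (Suc k)) x) = card (\<Union>y\<in>{y\<in>{1..n}. okn n x y}. (Cons x) ` Sset n (Suc k) y)"
    using Sset_SucSuc[of n k x] Suc.prems by simp
  also have "\<dots> = (\<Sum>y\<in>{y\<in>{1..n}. okn n x y}. card ((Cons x) ` Sset n (Suc k) y))"
    apply (rule card_UN_disjoint)
      apply simp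
     apply (simp add: Sset_finite)
    apply (auto simp: Sset_def)
    done
  also have "\<dots> = (\<Sum>y\<in>{y\<in>{1..n}. okn n x y}. acnt n k y)"
    by (rule sum.cong) (auto simp: card_image Suc.IH)
  finally show ?case by simp
qed

lemma c_coef_acnt: "x \<in> {1..n} \<Longrightarrow> c_coef n (Suc k) x = acnt n k x"
  using c_coef_Sset card_Sset by simp

lemma acnt_bound: "acnt n k x \<le> n ^ k"
proof (induction k arbitrary: x)
  case (Suc k)
  have "acnt n (Suc k) x \<le> (\<Sum>y\<in>{y\<in>{1..n}. okn n x y}. n ^ k)"
    unfolding acnt.simps by (rule sum_mono) (rule Suc.IH)
  also have "\<dots> \<le> (\<Sum>y\<in>{1..n}. n ^ k)" by (rule sum_mono2) auto
  finally show ?case by simp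
qed simp



lemma det_bidiag:
  fixes A :: "'a :: comm_ring_1 mat"
  assumes A: "A \<in> carrier_mat n n"
  shows "det (mat n n (\<lambda>(j,i). if Suc j < n then A$$(j,i) - A$$(Suc j,i) else A$$(j,i))) = det A"
proof -
  define L :: "'a mat" where "L = mat n n (\<lambda>(j,k). if k = j then 1 else if k = Suc j then -1 else 0)"
  have Lc: "L \<in> carrier_mat n n" unfolding L_def by simp
  have "upper_triangular L" unfolding L_def upper_triangular_def by auto
  then have "det L = prod_list (diag_mat L)" using det_upper_triangular Lc by blast
  also have "\<dots> = 1" unfolding prod_list_diag_prod using Lc by (simp add: L_def)
  finally have dL: "det L = 1" .
  have eq: "L * A = mat n n (\<lambda>(j,i). if Suc j < n then A$$(j,i) - A$$(Suc j,i) else A$$(j,i))"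
  proof (rule eq_matI)
    fix j i assume j: "j < dim_row (mat n n (\<lambda>(j,i). if Suc j < n then A$$(j,i) - A$$(Suc j,i) else A$$(j,i)))"
      and i: "i < dim_col (mat n n (\<lambda>(j,i). if Suc j < n then A$$(j,i) - A$$(Suc j,i) else A$$(j,i)))"
    have jn: "j < n" and "i < n" using j i by auto
    have "(L * A) $$ (j,i) = (\<Sum>k\<in>{0..<n}. L $$ (j,k) * A $$ (k,i))"
      using jn \<open>i < n\<close> A Lc by (simp add: scalar_prod_def)
    also have "\<dots> = (\<Sum>k\<in>{0..<n}. (if k = j then A $$ (k,i) else 0) - (if k = Suc j then A $$ (k,i) else 0))"
      by (rule sum.cong) (auto simp: L_def jn)
    also have "\<dots> = A $$ (j,i) - (if Suc j < n then A $$ (Suc j,i) else 0)"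
      by (simp add: sum_subtractf jn)
    finally show "(L * A) $$ (j,i) = mat n n (\<lambda>(j,i). if Suc j < n then A$$(j,i) - A$$(Suc j,i) else A$$(j,i)) $$ (j,i)"
      using jn \<open>i < n\<close> by simp
  qed (use A Lc in auto)
  have "det (L * A) = det L * det A" using det_mult Lc A by blast
  then show ?thesis using eq dL by simp
qed

lemma det_single_col:
  fixes A :: "'a :: comm_ring_1 mat"
  assumes A: "A \<in> carrier_mat n n" and k: "k < n" and p: "p < n"
    and z: "\<And>i. i < n \<Longrightarrow> i \<noteq> k \<Longrightarrow> A $$ (i,p) = 0"
  shows "det A = A $$ (k,p) * cofactor A k p"
proof -
  have "det A = (\<Sum>i<n. A $$ (i,p) * cofactor A i p)" using laplace_expansion_column[OF A p] .
  also have "\<dots> = A $$ (k,p) * cofactor A k p + (\<Sum>i\<in>{..<n}-{k}. A $$ (i,p) * cofactor A i p)"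
    by (rule sum.remove) (use k in auto)
  also have "(\<Sum>i\<in>{..<n}-{k}. A $$ (i,p) * cofactor A i p) = 0"
    by (rule sum.neutral) (use z in auto)
  finally show ?thesis by simp
qed


definition Me :: "nat \<Rightarrow> nat \<Rightarrow> nat \<Rightarrow> real" where
  "Me n j i = (if j \<le> i + 1 \<or> (j = n - 1 \<and> i = n - 3) then 1 else 0)"

definition Dform :: "nat \<Rightarrow> real \<Rightarrow> nat \<Rightarrow> nat \<Rightarrow> real" where
  "Dform n t j c = (if j = c then 1 else 0) - (if Suc j = c then 1 else 0)
      - t * ((if Suc c = j then 1 else 0) - (if j = n - 2 \<and> c = n - 3 then 1 else 0))"

lemma a1: "j \<noteq> n - 2 \<Longrightarrow> Dform n t j i = ((if j = i then 1 else 0) - t * (if j \<le> i + 1 then 1 else 0))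
                 - ((if Suc j = i then 1 else 0) - t * (if Suc j \<le> i + 1 then 1 else 0))"
proof -
  assume h: "j \<noteq> n - 2"
  consider "i + 1 < j" | "i + 1 = j" | "i = j" | "i = j + 1" | "j + 1 < i" by linarith
  then show ?thesis by cases (use h in \<open>simp_all add: Dform_def\<close>)
qed

lemma a2: "i \<le> q \<Longrightarrow> q + 4 \<le> n \<Longrightarrow> Dform n t q i + Dform n t (Suc q) i = (if q = i then 1 else 0) - t * (if q \<le> i + 1 then 1 else 0)"
proof -
  assume h: "i \<le> q" "q + 4 \<le> n"
  have h2: "q \<noteq> n - 2" "Suc q \<noteq> n - 2" using h by arith+
  consider "i + 1 < q" | "i + 1 = q" | "i = q" using h by arith
  then show ?thesis by cases (use h h2 in \<open>simp_all add: Dform_def\<close>)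
qed

lemma Me_diff: "3 \<le> n \<Longrightarrow> Suc j < n \<Longrightarrow> Me n j c - Me n (Suc j) c
   = (if Suc c = j then 1 else 0) - (if j = n - 2 \<and> c = n - 3 then 1 else 0)"
  unfolding Me_def by auto

lemma det_Am:
  fixes t :: real
  assumes n: "3 \<le> n" and p1: "1 \<le> p" and p2: "p + 2 \<le> n"
  shows "det (mat n n (\<lambda>(j,i). if i = p then 1 else (if j = i then 1 else 0) - t * Me n j i))
       = det (mat (p - 1) (p - 1) (\<lambda>(j,i). (if j = i then 1 else 0) - t * (if j \<le> i + 1 then 1 else 0)))"
proof -
  define Am where "Am = mat n n (\<lambda>(j,i). if i = p then 1 else (if j = i then 1 else 0) - t * Me n j i)"
  have Amc: "Am \<in> carrier_mat n n" unfolding Am_def by simp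
  define C where "C = mat n n (\<lambda>(j,i). if Suc j < n then Am$$(j,i) - Am$$(Suc j,i) else Am$$(j,i))"
  have dC: "det C = det Am" unfolding C_def using det_bidiag[OF Amc] .
  have Cc: "C \<in> carrier_mat n n" unfolding C_def by simp
  have Cp: "C $$ (i, p) = 0" if "i < n" "i \<noteq> n - 1" for i
    using that p2 unfolding C_def Am_def by auto
  have Cp1: "C $$ (n - 1, p) = 1" using n p2 unfolding C_def Am_def by auto
  have "det C = C $$ (n - 1, p) * cofactor C (n - 1) p"
    by (rule det_single_col[OF Cc _ _ Cp]) (use n p2 in auto)
  then have dC2: "det C = (-1) ^ (n - 1 + p) * det (mat_delete C (n - 1) p)"
    using Cp1 unfolding cofactor_def by simp
  define D where "D = mat_delete C (n - 1) p"
  have Dc: "D \<in> carrier_mat (n - 1) (n - 1)" unfolding D_def using mat_delete_carrier[OF Cc] .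
  have Dent: "D $$ (j, i) = Dform n t j (if i < p then i else Suc i)" if "j < n - 1" "i < n - 1" for j i
  proof -
    define c where "c = (if i < p then i else Suc i)"
    have cn: "c < n" "c \<noteq> p" using that unfolding c_def by auto
    have "D $$ (j, i) = C $$ (j, c)" using that Cc unfolding D_def mat_delete_def c_def by auto
    also have "\<dots> = Am $$ (j, c) - Am $$ (Suc j, c)" using that cn unfolding C_def by auto
    also have "\<dots> = (if j = c then 1 else 0) - (if Suc j = c then 1 else 0) - t * (Me n j c - Me n (Suc j) c)"
      using that cn unfolding Am_def by (simp add: algebra_simps)
    also have "\<dots> = Dform n t j c" unfolding Dform_def using Me_diff[OF n, of j c] that by simp
    finally show ?thesis unfolding c_def .
  qed
  define D' where "D' = (if 2 \<le> p then addrow 1 (p - 2) (p - 1) D else D)"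
  have dD': "det D' = det D" unfolding D'_def using det_addrow[OF _ _ Dc] p2 by auto
  have D'c: "D' \<in> carrier_mat (n - 1) (n - 1)" unfolding D'_def using Dc by auto
  have D'ent: "D' $$ (j, i) = Dform n t j (if i < p then i else Suc i)
     + (if 2 \<le> p \<and> j = p - 2 then Dform n t (p - 1) (if i < p then i else Suc i) else 0)"
    if "j < n - 1" "i < n - 1" for j i
    using that Dc Dent p2 unfolding D'_def by auto
  define r where "r = p - 1"
  define s where "s = n - 1 - r"
  have rs: "r + s = n - 1" unfolding r_def s_def using p2 by auto
  define B' where "B' = mat r r (\<lambda>(j,i). D' $$ (j,i))"
  define Q where "Q = mat s r (\<lambda>(j,i). D' $$ (j + r,i))"
  define R where "R = mat s s (\<lambda>(j,i). D' $$ (j + r,i + r))"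
  have UR: "D' $$ (j, i) = 0" if "j < r" "r \<le> i" "i < n - 1" for j i
  proof -
    have jn: "j < n - 1" using that by auto
    define c where "c = (if i < p then i else Suc i)"
    have D'j: "D' $$ (j, i) = Dform n t j c + (if 2 \<le> p \<and> j = p - 2 then Dform n t (p - 1) c else 0)"
      unfolding c_def using D'ent[OF jn that(3)] .
    show ?thesis
    proof (cases "2 \<le> p \<and> j = p - 2")
      case True
      show ?thesis
      proof (cases "i < p")
        case True
        then have "c = p - 1" "i = p - 1" using that unfolding c_def r_def by auto
        then have "Dform n t j c = -1" "Dform n t (p - 1) c = 1"
          using \<open>2 \<le> p \<and> j = p - 2\<close> p2 unfolding Dform_def by auto
        then show ?thesis using D'j \<open>2 \<le> p \<and> j = p - 2\<close> by simp
      next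
        case False
        then have cc: "c = Suc i" "p \<le> i" unfolding c_def by auto
        have "Dform n t j c = 0" using cc \<open>2 \<le> p \<and> j = p - 2\<close> unfolding Dform_def by auto
        moreover have "Dform n t (p - 1) c = 0" using cc \<open>2 \<le> p \<and> j = p - 2\<close> unfolding Dform_def by auto
        ultimately show ?thesis using D'j by simp
      qed
    next
      case False
      then have "j + 2 < p" using that unfolding r_def by auto
      moreover have "i \<le> c" "p - 1 \<le> i" using that unfolding c_def r_def by auto
      ultimately have "Dform n t j c = 0" using p2 unfolding Dform_def by auto
      then show ?thesis using D'j False by simp
    qed
  qed
  have D'eq: "D' = four_block_mat B' (0\<^sub>m r s) Q R"
  proof (rule eq_matI)
    fix j i assume j: "j < dim_row (four_block_mat B' (0\<^sub>m r s) Q R)"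
      and i: "i < dim_col (four_block_mat B' (0\<^sub>m r s) Q R)"
    have jn: "j < n - 1" "i < n - 1" using j i rs unfolding B'_def R_def by auto
    show "D' $$ (j, i) = four_block_mat B' (0\<^sub>m r s) Q R $$ (j, i)"
      using j i UR[of j i] jn unfolding B'_def Q_def R_def by auto
  qed (use D'c rs in \<open>auto simp: B'_def R_def\<close>)
  have dD'2: "det D' = det B' * det R"
    unfolding D'eq by (rule det_four_block_mat_upper_right_zero) (auto simp: B'_def Q_def R_def)
  have Rlow: "R $$ (a, b) = 0" if "a < b" "b < s" for a b
  proof -
    have jn: "a + r < n - 1" "b + r < n - 1" using that rs by auto
    have R: "R $$ (a, b) = D' $$ (a + r, b + r)" using that unfolding R_def by auto
    have c: "(if b + r < p then b + r else Suc (b + r)) = Suc (b + r)" using that p1 unfolding r_def by auto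
    have nc: "\<not> (2 \<le> p \<and> a + r = p - 2)" using p1 unfolding r_def by auto
    have "R $$ (a, b) = Dform n t (a + r) (Suc (b + r))" unfolding R D'ent[OF jn] c using nc by (simp only: if_False)
    also have "\<dots> = 0" using that unfolding Dform_def by auto
    finally show ?thesis .
  qed
  have R00: "R $$ (0, 0) = 1"
  proof -
    have jn: "r < n - 1" using rs p2 unfolding s_def r_def by auto
    have s0: "0 < s" using p2 unfolding s_def r_def by auto
    have R: "R $$ (0, 0) = D' $$ (r, r)" using s0 unfolding R_def by auto
    have c: "(if r < p then r else Suc r) = r" using p1 unfolding r_def by auto
    have nc: "\<not> (2 \<le> p \<and> r = p - 2)" using p1 unfolding r_def by auto
    have "R $$ (0, 0) = Dform n t r r" unfolding R D'ent[OF jn jn] c using nc by (simp only: if_False)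
    also have "\<dots> = 1" using n unfolding Dform_def by auto
    finally show ?thesis .
  qed
  have Raa: "R $$ (a, a) = -1" if "1 \<le> a" "a < s" for a
  proof -
    have jn: "a + r < n - 1" using that rs by auto
    have R: "R $$ (a, a) = D' $$ (a + r, a + r)" using that unfolding R_def by auto
    have c: "(if a + r < p then a + r else Suc (a + r)) = Suc (a + r)" using that p1 unfolding r_def by auto
    have nc: "\<not> (2 \<le> p \<and> a + r = p - 2)" using p1 unfolding r_def by auto
    have "R $$ (a, a) = Dform n t (a + r) (Suc (a + r))" unfolding R D'ent[OF jn jn] c using nc by (simp only: if_False)
    also have "\<dots> = -1" using n unfolding Dform_def by auto
    finally show ?thesis .
  qed
  have "det R = prod_list (diag_mat R)"
    by (rule det_lower_triangular[of s]) (use Rlow in \<open>auto simp: R_def\<close>)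
  also have "\<dots> = (\<Prod>a = 0..<s. R $$ (a, a))" unfolding prod_list_diag_prod by (simp add: R_def)
  also have "\<dots> = R $$ (0, 0) * (\<Prod>a = Suc 0..<s. R $$ (a, a))"
    by (rule prod.atLeast_Suc_lessThan) (use p2 in \<open>auto simp: s_def r_def\<close>)
  also have "(\<Prod>a = Suc 0..<s. R $$ (a, a)) = (\<Prod>a = Suc 0..<s. -1)"
    by (rule prod.cong) (use Raa in auto)
  also have "R $$ (0, 0) * (\<Prod>a = Suc 0..<s. -1) = (-1) ^ (s - 1)" using R00 by simp
  finally have dR: "det R = (-1) ^ (s - 1)" .
  define B where "B = mat r r (\<lambda>(j,i). (if j = i then 1 else 0) - t * (if j \<le> i + 1 then 1 else 0) :: real)"
  have Bc: "B \<in> carrier_mat r r" unfolding B_def by simp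
  have "B' = mat r r (\<lambda>(j,i). if Suc j < r then B$$(j,i) - B$$(Suc j,i) else B$$(j,i))"
  proof (rule eq_matI)
    fix j i assume j: "j < dim_row (mat r r (\<lambda>(j,i). if Suc j < r then B$$(j,i) - B$$(Suc j,i) else B$$(j,i)))"
      and i: "i < dim_col (mat r r (\<lambda>(j,i). if Suc j < r then B$$(j,i) - B$$(Suc j,i) else B$$(j,i)))"
    have ji: "j < r" "i < r" using i j by auto
    then have jn: "j < n - 1" "i < n - 1" using rs p2 unfolding s_def r_def by auto
    show "B' $$ (j, i) = mat r r (\<lambda>(j,i). if Suc j < r then B$$(j,i) - B$$(Suc j,i) else B$$(j,i)) $$ (j, i)"
    proof -
      have c: "(if i < p then i else Suc i) = i" using ji unfolding r_def by auto
      have B'e: "B' $$ (j,i) = Dform n t j i + (if 2 \<le> p \<and> j = p - 2 then Dform n t (p - 1) i else 0)"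
        using ji unfolding B'_def using D'ent[OF jn] c by simp
      have rhs: "mat r r (\<lambda>(j,i). if Suc j < r then B$$(j,i) - B$$(Suc j,i) else B$$(j,i)) $$ (j, i)
         = (if Suc j < r then ((if j = i then 1 else 0) - t * (if j \<le> i + 1 then 1 else 0))
                 - ((if Suc j = i then 1 else 0) - t * (if Suc j \<le> i + 1 then 1 else 0))
            else (if j = i then 1 else 0) - t * (if j \<le> i + 1 then 1 else 0))"
        using ji unfolding B_def by auto
      show ?thesis
      proof (cases "Suc j < r")
        case True
        have nc: "\<not> (2 \<le> p \<and> j = p - 2)" using True unfolding r_def by auto
        have jn2: "j \<noteq> n - 2" using True p2 unfolding r_def by auto
        have "Dform n t j i = ((if j = i then 1 else 0) - t * (if j \<le> i + 1 then 1 else 0))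
                 - ((if Suc j = i then 1 else 0) - t * (if Suc j \<le> i + 1 then 1 else 0))"
          using a1[OF jn2] .
        moreover have ez: "(if 2 \<le> p \<and> j = p - 2 then Dform n t (p - 1) i else 0) = 0"
          by (rule if_not_P[OF nc])
        ultimately show ?thesis unfolding B'e rhs ez using True by simp
      next
        case False
        then have jr: "Suc j = r" using ji by auto
        then have cc: "2 \<le> p \<and> j = p - 2" "j = p - 2" "i < p - 1" using ji unfolding r_def by auto
        have "Dform n t j i + Dform n t (p - 1) i = (if j = i then 1 else 0) - t * (if j \<le> i + 1 then 1 else 0)"
        proof -
          have e: "p - 1 = Suc (p - 2)" using cc by arith
          have "i \<le> p - 2" "p - 2 + 4 \<le> n" using cc p2 by arith+
          then show ?thesis using a2[of i "p - 2" n t] cc(2) e by simp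
        qed
        then show ?thesis unfolding B'e rhs using False cc(1) by simp
      qed
    qed
  qed (auto simp: B'_def)
  then have dB: "det B' = det B" using det_bidiag[OF Bc] by simp
  have sgn: "(-1 :: real) ^ (n - 1 + p) * (-1) ^ (s - 1) = 1"
  proof -
    have "(n - 1 + p) + (s - 1) = 2 * (n - 1)" unfolding s_def r_def using p1 p2 by auto
    then show ?thesis by (metis power_add power_mult neg_one_even_power even_mult_iff even_two_times_div_two dvd_triv_left)
  qed
  have "det Am = (-1) ^ (n - 1 + p) * (det B * (-1) ^ (s - 1))"
    using dC dC2 dD' dD'2 dR dB unfolding D_def by simp
  also have "\<dots> = det B" using sgn by (simp add: algebra_simps)
  finally show ?thesis unfolding Am_def B_def r_def .
qed



lemma M_Me: "j < n \<Longrightarrow> i < n \<Longrightarrow> M_mat n $$ (j, i) = Me n j i"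
  unfolding M_mat_def Me_def by auto

lemma Me_okn: "3 \<le> n \<Longrightarrow> j < n \<Longrightarrow> i < n \<Longrightarrow> Me n j i = (if okn n (Suc j) (Suc i) then 1 else 0)"
  unfolding Me_def okn_def by auto

lemma acnt_Me:
  assumes n: "3 \<le> n" and j: "j < n"
  shows "real (acnt n (Suc k) (Suc j)) = (\<Sum>i<n. Me n j i * real (acnt n k (Suc i)))"
proof -
  have "acnt n (Suc k) (Suc j) = (\<Sum>y\<in>{1..n}. if okn n (Suc j) y then acnt n k y else 0)"
    unfolding acnt.simps by (rule sum.inter_filter) simp
  also have "\<dots> = (\<Sum>i<n. if okn n (Suc j) (Suc i) then acnt n k (Suc i) else 0)"
  proof -
    have "{1..n} = Suc ` {..<n}"
    proof (intro equalityI subsetI)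
      fix y assume "y \<in> {1..n}"
      then have "y = Suc (y - 1)" "y - 1 < n" by auto
      then show "y \<in> Suc ` {..<n}" by blast
    qed auto
    then show ?thesis by (simp add: sum.reindex)
  qed
  finally have "acnt n (Suc k) (Suc j) = (\<Sum>i<n. if okn n (Suc j) (Suc i) then acnt n k (Suc i) else 0)" .
  then have "real (acnt n (Suc k) (Suc j)) = real (\<Sum>i<n. if okn n (Suc j) (Suc i) then acnt n k (Suc i) else 0)"
    by (rule arg_cong)
  also have "\<dots> = (\<Sum>i<n. if okn n (Suc j) (Suc i) then real (acnt n k (Suc i)) else 0)"
    unfolding of_nat_sum by (rule sum.cong) auto
  also have "\<dots> = (\<Sum>i<n. Me n j i * real (acnt n k (Suc i)))"
    by (rule sum.cong) (auto simp: Me_okn[OF n j])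
  finally show ?thesis .
qed

lemma char_poly_scaled:
  fixes M :: "real mat" and t :: real
  assumes M: "M \<in> carrier_mat r r" and t: "t \<noteq> 0"
  shows "t ^ r * poly (char_poly M) (1 / t) = det (mat r r (\<lambda>(j,i). (if j = i then 1 else 0) - t * M $$ (j,i)))"
proof -
  have "poly (char_poly M) (1 / t) = det (- (char_matrix M (1 / t)))" using char_poly_matrix[OF M] .
  moreover have "t \<cdot>\<^sub>m (- (char_matrix M (1 / t))) = mat r r (\<lambda>(j,i). (if j = i then 1 else 0) - t * M $$ (j,i))"
    by (rule eq_matI) (use M t in \<open>auto simp: char_matrix_def algebra_simps\<close>)
  moreover have "dim_col (- (char_matrix M (1 / t))) = r" using M by (simp add: char_matrix_def)
  ultimately show ?thesis using det_smult[of t "- (char_matrix M (1 / t))"] by simp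
qed

lemma K_scaled:
  fixes t :: real assumes "t \<noteq> 0"
  shows "t ^ n * poly (K_poly n) (1 / t) = det (mat n n (\<lambda>(j,i). (if j = i then 1 else 0) - t * Me n j i))"
proof -
  have "t ^ n * poly (K_poly n) (1 / t) = det (mat n n (\<lambda>(j,i). (if j = i then 1 else 0) - t * M_mat n $$ (j,i)))"
    unfolding K_poly_def by (rule char_poly_scaled) (use assms in \<open>auto simp: M_mat_def\<close>)
  also have "mat n n (\<lambda>(j,i). (if j = i then 1 else 0) - t * M_mat n $$ (j,i)) = mat n n (\<lambda>(j,i). (if j = i then 1 else 0) - t * Me n j i)"
    by (rule eq_matI) (auto simp: M_Me)
  finally show ?thesis .
qed

lemma A_scaled:
  fixes t :: real assumes "t \<noteq> 0"
  shows "t ^ r * poly (A_poly r) (1 / t) = det (mat r r (\<lambda>(j,i). (if j = i then 1 else 0) - t * (if j \<le> i + 1 then 1 else 0)))"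
proof (cases "r = 0")
  case True
  then show ?thesis unfolding A_poly_def by simp
next
  case False
  have "t ^ r * poly (A_poly r) (1 / t) = det (mat r r (\<lambda>(j,i). (if j = i then 1 else 0) - t * N_mat r $$ (j,i)))"
    unfolding A_poly_def using False by simp (rule char_poly_scaled, use assms in \<open>auto simp: N_mat_def\<close>)
  also have "mat r r (\<lambda>(j,i). (if j = i then 1 else 0) - t * N_mat r $$ (j,i)) = mat r r (\<lambda>(j,i). (if j = i then 1 else 0) - t * (if j \<le> i + 1 then 1 else 0))"
    by (rule eq_matI) (auto simp: N_mat_def)
  finally show ?thesis .
qed


lemma series_main:
  fixes t :: real
  assumes n: "3 \<le> n" and tn: "real n * \<bar>t\<bar> < 1"
  defines "g \<equiv> \<lambda>j k. real (acnt n k (Suc j)) * t ^ k"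
  shows "\<And>j. summable (g j)"
    and "\<And>j. j < n \<Longrightarrow> suminf (g j) = 1 + t * (\<Sum>i<n. Me n j i * suminf (g i))"
proof -
  show sm: "summable (g j)" for j
  proof (rule summable_comparison_test[of _ "\<lambda>k. (real n * \<bar>t\<bar>) ^ k"])
    show "\<exists>N. \<forall>k\<ge>N. norm (g j k) \<le> (real n * \<bar>t\<bar>) ^ k"
    proof (intro exI allI impI)
      fix k :: nat
      have "real (acnt n k (Suc j)) \<le> real n ^ k" using acnt_bound[of n k "Suc j"]
        by (metis of_nat_le_iff of_nat_power)
      then have "real (acnt n k (Suc j)) * \<bar>t\<bar> ^ k \<le> real n ^ k * \<bar>t\<bar> ^ k"
        by (rule mult_right_mono) simp
      moreover have "norm (g j k) = real (acnt n k (Suc j)) * \<bar>t\<bar> ^ k"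
        unfolding g_def real_norm_def abs_mult power_abs by simp
      moreover have "(real n * \<bar>t\<bar>) ^ k = real n ^ k * \<bar>t\<bar> ^ k" by (rule power_mult_distrib)
      ultimately show "norm (g j k) \<le> (real n * \<bar>t\<bar>) ^ k" by simp
    qed
    show "summable (\<lambda>k. (real n * \<bar>t\<bar>) ^ k)"
      by (rule summable_geometric) (use tn in simp)
  qed
  fix j assume j: "j < n"
  have "(\<lambda>k. \<Sum>i<n. Me n j i * g i k) sums (\<Sum>i<n. Me n j i * suminf (g i))"
    by (rule sums_sum, rule sums_mult, rule summable_sums[OF sm])
  then have "(\<lambda>k. t * (\<Sum>i<n. Me n j i * g i k)) sums (t * (\<Sum>i<n. Me n j i * suminf (g i)))"
    by (rule sums_mult)
  moreover have "t * (\<Sum>i<n. Me n j i * g i k) = g j (Suc k)" for k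
  proof -
    have "g j (Suc k) = t * (real (acnt n (Suc k) (Suc j)) * t ^ k)" unfolding g_def by simp
    also have "real (acnt n (Suc k) (Suc j)) * t ^ k = (\<Sum>i<n. Me n j i * real (acnt n k (Suc i))) * t ^ k"
      by (simp only: acnt_Me[OF n j])
    also have "\<dots> = (\<Sum>i<n. Me n j i * g i k)"
      unfolding g_def sum_distrib_right by (simp only: mult.assoc)
    finally show ?thesis by simp
  qed
  ultimately have "(\<lambda>k. g j (Suc k)) sums (t * (\<Sum>i<n. Me n j i * suminf (g i)))" by simp
  then have "g j sums (t * (\<Sum>i<n. Me n j i * suminf (g i)) + g j 0)" by (simp add: sums_Suc_iff)
  then show "suminf (g j) = 1 + t * (\<Sum>i<n. Me n j i * suminf (g i))"
    unfolding g_def by (simp add: sums_iff)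
qed


theorem lemma5:
  fixes n m :: nat
  assumes "n \<ge> 3" and "2 \<le> m" and "m \<le> n - 1"
  shows "\<exists>\<epsilon>>0. \<forall>t::real. 0 < \<bar>t\<bar> \<and> \<bar>t\<bar> < \<epsilon> \<longrightarrow>
           (\<lambda>k. real (c_coef n (Suc k) m) * t ^ Suc k) sums
             (t ^ (m - 1) * poly (A_poly (m - 2)) (1 / t) / (t ^ n * poly (K_poly n) (1 / t)))"
proof -
  have n: "3 \<le> n" using assms(1) .
  define p where "p = m - 1"
  have p1: "1 \<le> p" and p2: "p + 2 \<le> n" using assms unfolding p_def by auto
  have mp: "m = Suc p" using assms unfolding p_def by auto
  have Mc: "M_mat n \<in> carrier_mat n n" unfolding M_mat_def by simp
  have degK: "degree (K_poly n) = n" and lcK: "lead_coeff (K_poly n) = 1"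
    using degree_monic_char_poly[OF Mc] unfolding K_poly_def by auto
  define q where "q = reflect_poly (K_poly n)"
  have q0: "poly q 0 = 1" unfolding q_def poly_0_coeff_0 using lcK by simp
  have "(poly q) \<midarrow>0\<rightarrow> poly q 0" using poly_isCont[of 0 q] unfolding isCont_def by simp
  then obtain \<delta> where \<delta>: "\<delta> > 0" and \<delta>h: "\<And>x. x \<noteq> 0 \<and> norm (x - 0) < \<delta> \<Longrightarrow> norm (poly q x - 1) < 1 / 2"
    using LIM_D[OF \<open>(poly q) \<midarrow>0\<rightarrow> poly q 0\<close>, of "1/2"] q0 by (auto simp del: poly_0_coeff_0)
  define \<epsilon> where "\<epsilon> = min \<delta> (1 / real n)"
  have \<epsilon>0: "\<epsilon> > 0" unfolding \<epsilon>_def using \<delta> n by auto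
  show ?thesis
  proof (intro exI[of _ \<epsilon>] conjI allI impI \<epsilon>0)
    fix t :: real assume t: "0 < \<bar>t\<bar> \<and> \<bar>t\<bar> < \<epsilon>"
    have t0: "t \<noteq> 0" using t by auto
    have tn: "real n * \<bar>t\<bar> < 1"
    proof -
      have "\<bar>t\<bar> < 1 / real n" using t unfolding \<epsilon>_def by auto
      then show ?thesis using n by (simp add: field_simps)
    qed
    define dA where "dA = t ^ n * poly (K_poly n) (1 / t)"
    have "poly q t = dA" unfolding q_def dA_def using poly_reflect_poly_nz[OF t0, of "K_poly n"] degK
      by (simp add: divide_inverse)
    moreover have "norm (poly q t - 1) < 1 / 2" using \<delta>h[of t] t t0 unfolding \<epsilon>_def by auto
    ultimately have dA0: "dA \<noteq> 0" by auto
    define Amat where "Amat = mat n n (\<lambda>(j,i). (if j = i then 1 else 0) - t * Me n j i)"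
    have Ac: "Amat \<in> carrier_mat n n" unfolding Amat_def by simp
    have dAdet: "dA = det Amat" unfolding dA_def Amat_def using K_scaled[OF t0] .
    define g where "g = (\<lambda>j k. real (acnt n k (Suc j)) * t ^ k)"
    have sm: "\<And>j. summable (g j)" and hrec: "\<And>j. j < n \<Longrightarrow> suminf (g j) = 1 + t * (\<Sum>i<n. Me n j i * suminf (g i))"
      using series_main[OF n tn] unfolding g_def by auto
    define hv where "hv = vec n (\<lambda>j. suminf (g j))"
    have hvc: "hv \<in> carrier_vec n" unfolding hv_def by simp
    have Ahv: "Amat *\<^sub>v hv = vec n (\<lambda>_. 1)"
    proof (rule eq_vecI)
      fix j assume "j < dim_vec (vec n (\<lambda>_. 1 :: real))"
      then have j: "j < n" by simp
      have "(Amat *\<^sub>v hv) $ j = (\<Sum>i\<in>{0..<n}. ((if j = i then 1 else 0) - t * Me n j i) * suminf (g i))"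
        using j Ac unfolding Amat_def hv_def by (simp add: scalar_prod_def)
      also have "\<dots> = (\<Sum>i\<in>{0..<n}. (if j = i then suminf (g i) else 0)) - t * (\<Sum>i\<in>{0..<n}. Me n j i * suminf (g i))"
      proof -
        have "(\<Sum>i\<in>{0..<n}. ((if j = i then 1 else 0) - t * Me n j i) * suminf (g i))
            = (\<Sum>i\<in>{0..<n}. (if j = i then suminf (g i) else 0) - t * (Me n j i * suminf (g i)))"
          by (rule sum.cong) (simp_all add: algebra_simps)
        also have "\<dots> = (\<Sum>i\<in>{0..<n}. (if j = i then suminf (g i) else 0)) - (\<Sum>i\<in>{0..<n}. t * (Me n j i * suminf (g i)))"
          by (rule sum_subtractf)
        also have "(\<Sum>i\<in>{0..<n}. t * (Me n j i * suminf (g i))) = t * (\<Sum>i\<in>{0..<n}. Me n j i * suminf (g i))"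
          by (rule sum_distrib_left[symmetric])
        finally show ?thesis .
      qed
      also have "\<dots> = suminf (g j) - t * (\<Sum>i<n. Me n j i * suminf (g i))"
        using j by (simp add: atLeast0LessThan)
      also have "\<dots> = 1" using hrec[OF j] by simp
      finally show "(Amat *\<^sub>v hv) $ j = vec n (\<lambda>_. 1) $ j" using j by simp
    qed (use Ac in simp)
    have pn: "p < n" using p2 by simp
    have cr: "det (replace_col Amat (Amat *\<^sub>v hv) p) = hv $ p * det Amat"
      using cramer_lemma_mat[OF Ac hvc pn] .
    have rc: "replace_col Amat (Amat *\<^sub>v hv) p = mat n n (\<lambda>(j,i). if i = p then 1 else (if j = i then 1 else 0) - t * Me n j i)"
      unfolding Ahv by (rule eq_matI) (use Ac in \<open>auto simp: replace_col_def Amat_def\<close>)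
    have "hv $ p * dA = det (mat (p - 1) (p - 1) (\<lambda>(j,i). (if j = i then 1 else 0) - t * (if j \<le> i + 1 then 1 else 0)))"
      using cr rc det_Am[OF n p1 p2, of t] dAdet by simp
    also have "\<dots> = t ^ (m - 2) * poly (A_poly (m - 2)) (1 / t)"
      using A_scaled[OF t0, of "p - 1"] mp by simp
    finally have key: "suminf (g p) * dA = t ^ (m - 2) * poly (A_poly (m - 2)) (1 / t)"
      unfolding hv_def using pn by simp
    have ser: "(\<lambda>k. real (c_coef n (Suc k) m) * t ^ Suc k) = (\<lambda>k. t * g p k)"
    proof
      fix k
      have "c_coef n (Suc k) m = acnt n k m" by (rule c_coef_acnt) (use assms in auto)
      then show "real (c_coef n (Suc k) m) * t ^ Suc k = t * g p k" unfolding g_def mp by simp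
    qed
    have "(\<lambda>k. t * g p k) sums (t * suminf (g p))" by (rule sums_mult, rule summable_sums[OF sm])
    moreover have "t * suminf (g p) = t ^ (m - 1) * poly (A_poly (m - 2)) (1 / t) / (t ^ n * poly (K_poly n) (1 / t))"
    proof -
      have "t ^ (m - 1) = t * t ^ (m - 2)" using assms(2) by (metis Suc_diff_Suc Suc_1 less_le_trans lessI numeral_2_eq_2 power_Suc)
      then show ?thesis using key dA0 unfolding dA_def[symmetric] by (simp add: field_simps)
    qed
    ultimately show "(\<lambda>k. real (c_coef n (Suc k) m) * t ^ Suc k) sums
             (t ^ (m - 1) * poly (A_poly (m - 2)) (1 / t) / (t ^ n * poly (K_poly n) (1 / t)))"
      unfolding ser by simp
  qed
qed


end
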